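(* Let $p\in(0,1)$, $\beta\in(0,\infty)$, and $f(x)=-\ln[p+(1-p)e^{-x}]$. Set $$A:=2f(\beta)-f(2\beta),\qquad B:=f(\beta)+f(2\beta)-f(3\beta).$$ Let $n,k$ be integers with $c:=k\ln(1/p)/\ln n\le 2$. Let $q,q'$ be integers with $0\le q,q'\le k$. Let $g_1,\dots,g_9\ge0$ be integers satisfying $$g_1+g_2+g_3\le k-q,\quad g_4+g_5+g_6\le q,\quad g_7+g_8+g_9\le k-q,$$ $$g_1+g_4+g_7\le k-q',\quad g_2+g_5+g_8\le q',\quad g_3+g_6+g_9\le k-q',$$ and put $g=g_1+\dots+g_9$. Define $$C_1=A(g_5+g_6+g_8+g_9),\quad C_3=A(g_4+g_5+g_7+g_8),$$ $$C_7=A(g_2+g_3+g_5+g_6),\quad C_9=A(g_1+g_2+g_4+g_5),$$ $$C_2=A(g_4+g_6+g_7+g_9)+B(g_5+g_8),\quad C_4=A(g_2+g_3+g_8+g_9)+B(g_5+g_6),$$ $$C_6=A(g_1+g_2+g_7+g_8)+B(g_4+g_5),\quad C_8=A(g_1+g_3+g_4+g_6)+B(g_2+g_5),$$ $$C_5=A(g_1+g_3+g_7+g_9)+B(g_2+g_4+g_6+g_8),$$ and $$\Psi=\frac{g_5(g_5-1)}{2}\big(2f(2\beta)-f(4\beta)\big)+\frac12\sum_{r=1}^9 g_rC_r.$$ Then $\Psi\le\bar\Psi(q,q',g,g_5)$, where $$\bar\Psi=\frac{g_5(g_5-1)}{2}\big(2f(2\beta)-f(4\beta)\big)+\frac12\big(f(\beta)+f(2\beta)-f(3\beta)\big)\big((k\wedge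 g)+g_5\big)(g-g_5).$$
   Context: $k\wedge g$ denotes $\min(k,g)$. *)

theory Defs
  imports Complex_Main
begin

definition fcn :: "real \<Rightarrow> real \<Rightarrow> real" where
  "fcn p x = - ln (p + (1 - p) * exp (- x))"

end

theory Submission
  imports Defs
begin

lemma comb:
  fixes A B m g1 g2 g3 g4 g5 g6 g7 g8 g9 :: real
  assumes nn: "0 \<le> g1" "0 \<le> g2" "0 \<le> g3" "0 \<le> g4" "0 \<le> g5" "0 \<le> g6" "0 \<le> g7" "0 \<le> g8" "0 \<le> g9"
    and AB: "A \<le> B" and B0: "0 \<le> B"
    and d1: "g5 + g6 + g8 + g9 \<le> m"
    and d2: "g4 + g6 + g7 + g9 + g5 + g8 \<le> m"
    and d3: "g4 + g5 + g7 + g8 \<le> m"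
    and d4: "g2 + g3 + g8 + g9 + g5 + g6 \<le> m"
    and d6: "g1 + g2 + g7 + g8 + g4 + g5 \<le> m"
    and d7: "g2 + g3 + g5 + g6 \<le> m"
    and d8: "g1 + g3 + g4 + g6 + g2 + g5 \<le> m"
    and d9: "g1 + g2 + g4 + g5 \<le> m"
  shows "g1 * (A * (g5 + g6 + g8 + g9)) + g2 * (A * (g4 + g6 + g7 + g9) + B * (g5 + g8))
       + g3 * (A * (g4 + g5 + g7 + g8)) + g4 * (A * (g2 + g3 + g8 + g9) + B * (g5 + g6))
       + g5 * (A * (g1 + g3 + g7 + g9) + B * (g2 + g4 + g6 + g8))
       + g6 * (A * (g1 + g2 + g7 + g8) + B * (g4 + g5)) + g7 * (A * (g2 + g3 + g5 + g6))
       + g8 * (A * (g1 + g3 + g4 + g6) + B * (g2 + g5)) + g9 * (A * (g1 + g2 + g4 + g5))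
       \<le> B * (m + g5) * ((g1+g2+g3+g4+g5+g6+g7+g8+g9) - g5)"
proof -
  define X where "X = g1 * (g5 + g6 + g8 + g9) + g2 * (g4 + g6 + g7 + g9)
       + g3 * (g4 + g5 + g7 + g8) + g4 * (g2 + g3 + g8 + g9)
       + g5 * (g1 + g3 + g7 + g9)
       + g6 * (g1 + g2 + g7 + g8) + g7 * (g2 + g3 + g5 + g6)
       + g8 * (g1 + g3 + g4 + g6) + g9 * (g1 + g2 + g4 + g5)"
  define Y where "Y = g2 * (g5 + g8) + g4 * (g5 + g6) + g5 * (g2 + g4 + g6 + g8) + g6 * (g4 + g5) + g8 * (g2 + g5)"
  have X0: "0 \<le> X" unfolding X_def using nn by simp
  have eq: "g1 * (A * (g5 + g6 + g8 + g9)) + g2 * (A * (g4 + g6 + g7 + g9) + B * (g5 + g8))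
       + g3 * (A * (g4 + g5 + g7 + g8)) + g4 * (A * (g2 + g3 + g8 + g9) + B * (g5 + g6))
       + g5 * (A * (g1 + g3 + g7 + g9) + B * (g2 + g4 + g6 + g8))
       + g6 * (A * (g1 + g2 + g7 + g8) + B * (g4 + g5)) + g7 * (A * (g2 + g3 + g5 + g6))
       + g8 * (A * (g1 + g3 + g4 + g6) + B * (g2 + g5)) + g9 * (A * (g1 + g2 + g4 + g5))
       = A * X + B * Y" unfolding X_def Y_def by (simp add: algebra_simps)
  have "A * X \<le> B * X" using AB X0 by (rule mult_right_mono)
  have XY: "X + Y = g5 * ((g1+g2+g3+g4+g5+g6+g7+g8+g9) - g5)
     + g1 * (g5 + g6 + g8 + g9) + g2 * (g4 + g6 + g7 + g9 + g5 + g8) + g3 * (g4 + g5 + g7 + g8)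
     + g4 * (g2 + g3 + g8 + g9 + g5 + g6) + g6 * (g1 + g2 + g7 + g8 + g4 + g5)
     + g7 * (g2 + g3 + g5 + g6) + g8 * (g1 + g3 + g4 + g6 + g2 + g5) + g9 * (g1 + g2 + g4 + g5)"
    unfolding X_def Y_def by (simp add: algebra_simps)
  have b1: "g1 * (g5 + g6 + g8 + g9) \<le> g1 * m" using d1 nn(1) by (rule mult_left_mono)
  have b2: "g2 * (g4 + g6 + g7 + g9 + g5 + g8) \<le> g2 * m" using d2 nn(2) by (rule mult_left_mono)
  have b3: "g3 * (g4 + g5 + g7 + g8) \<le> g3 * m" using d3 nn(3) by (rule mult_left_mono)
  have b4: "g4 * (g2 + g3 + g8 + g9 + g5 + g6) \<le> g4 * m" using d4 nn(4) by (rule mult_left_mono)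
  have b6: "g6 * (g1 + g2 + g7 + g8 + g4 + g5) \<le> g6 * m" using d6 nn(6) by (rule mult_left_mono)
  have b7: "g7 * (g2 + g3 + g5 + g6) \<le> g7 * m" using d7 nn(7) by (rule mult_left_mono)
  have b8: "g8 * (g1 + g3 + g4 + g6 + g2 + g5) \<le> g8 * m" using d8 nn(8) by (rule mult_left_mono)
  have b9: "g9 * (g1 + g2 + g4 + g5) \<le> g9 * m" using d9 nn(9) by (rule mult_left_mono)
  have "X + Y \<le> g5 * ((g1+g2+g3+g4+g5+g6+g7+g8+g9) - g5)
      + (g1+g2+g3+g4+g6+g7+g8+g9) * m"
    unfolding XY using b1 b2 b3 b4 b6 b7 b8 b9 by (simp add: algebra_simps)
  also have "\<dots> = (m + g5) * ((g1+g2+g3+g4+g5+g6+g7+g8+g9) - g5)" by (simp add: algebra_simps)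
  finally have "B * (X + Y) \<le> B * ((m + g5) * ((g1+g2+g3+g4+g5+g6+g7+g8+g9) - g5))"
    using B0 by (rule mult_left_mono)
  then show ?thesis unfolding eq using \<open>A * X \<le> B * X\<close> by (simp add: algebra_simps)
qed

lemma fvals:
  fixes p \<beta> :: real
  assumes hp: "0 < p" "p < 1" and hb: "0 < \<beta>"
  shows "2 * fcn p \<beta> - fcn p (2 * \<beta>) \<le> fcn p \<beta> + fcn p (2 * \<beta>) - fcn p (3 * \<beta>)"
    and "0 \<le> fcn p \<beta> + fcn p (2 * \<beta>) - fcn p (3 * \<beta>)"
proof -
  define t where "t = exp (- \<beta>)"
  have t0: "0 < t" and t1: "t < 1" using hb by (auto simp: t_def)
  have e2: "exp (- (2 * \<beta>)) = t^2" unfolding t_def by (simp add: power2_eq_square exp_add[symmetric])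
  have e3: "exp (- (3 * \<beta>)) = t^3" unfolding t_def
    by (simp add: power3_eq_cube exp_add[symmetric] algebra_simps)
  define h where "h x = p + (1 - p) * x" for x
  have hpos: "0 < h x" if "0 < x" for x using that hp unfolding h_def
    by (simp add: add_pos_nonneg)
  have F1: "fcn p \<beta> = - ln (h t)" unfolding fcn_def h_def t_def by simp
  have F2: "fcn p (2*\<beta>) = - ln (h (t^2))" unfolding fcn_def h_def e2 by simp
  have F3: "fcn p (3*\<beta>) = - ln (h (t^3))" unfolding fcn_def h_def e3 by simp
  have pp: "0 < p * (1 - p)" using hp by simp
  have k1: "h t * h (t^3) - h (t^2) * h (t^2) = p * (1-p) * (t * (1-t)^2)"
    unfolding h_def by (simp add: algebra_simps power2_eq_square power3_eq_cube)
  have k2: "h (t^3) - h t * h (t^2) = p * (1-p) * ((1-t) * (1-t^2))"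
    unfolding h_def by (simp add: algebra_simps power2_eq_square power3_eq_cube)
  have "0 \<le> p * (1-p) * (t * (1-t)^2)" using pp t0 by simp
  hence i1: "h (t^2) * h (t^2) \<le> h t * h (t^3)" using k1 by linarith
  have "0 \<le> (1-t) * (1-t^2)" using t0 t1 by (simp add: power_le_one)
  hence "0 \<le> p * (1-p) * ((1-t) * (1-t^2))" using pp by simp
  hence i2: "h t * h (t^2) \<le> h (t^3)" using k2 by linarith
  have p1: "0 < h t" "0 < h (t^2)" "0 < h (t^3)" using t0 hpos by auto
  have "ln (h (t^2) * h (t^2)) \<le> ln (h t * h (t^3))"
    using i1 p1 by (simp add: mult_pos_pos)
  hence "ln (h (t^2)) + ln (h (t^2)) \<le> ln (h t) + ln (h (t^3))"
    using p1 by (simp add: ln_mult)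
  thus "2 * fcn p \<beta> - fcn p (2 * \<beta>) \<le> fcn p \<beta> + fcn p (2 * \<beta>) - fcn p (3 * \<beta>)"
    unfolding F1 F2 F3 by linarith
  have "ln (h t * h (t^2)) \<le> ln (h (t^3))"
    using i2 p1 by (simp add: mult_pos_pos)
  hence "ln (h t) + ln (h (t^2)) \<le> ln (h (t^3))" using p1 by (simp add: ln_mult)
  thus "0 \<le> fcn p \<beta> + fcn p (2 * \<beta>) - fcn p (3 * \<beta>)"
    unfolding F1 F2 F3 by linarith
qed

theorem lemma3p1:
  fixes p \<beta> :: real and n :: int and k q q' :: nat
    and g1 g2 g3 g4 g5 g6 g7 g8 g9 :: nat
  assumes hp: "0 < p" "p < 1" and hb: "0 < \<beta>"
    and hc: "real k * ln (1 / p) / ln (real_of_int n) \<le> 2"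
    and hq: "q \<le> k" "q' \<le> k"
    and r1: "g1 + g2 + g3 \<le> k - q" and r2: "g4 + g5 + g6 \<le> q" and r3: "g7 + g8 + g9 \<le> k - q"
    and c1: "g1 + g4 + g7 \<le> k - q'" and c2: "g2 + g5 + g8 \<le> q'" and c3: "g3 + g6 + g9 \<le> k - q'"
  shows
    "let f = fcn p;
         A = 2 * f \<beta> - f (2 * \<beta>);
         B = f \<beta> + f (2 * \<beta>) - f (3 * \<beta>);
         g = g1 + g2 + g3 + g4 + g5 + g6 + g7 + g8 + g9;
         C1 = A * real (g5 + g6 + g8 + g9);
         C3 = A * real (g4 + g5 + g7 + g8);
         C7 = A * real (g2 + g3 + g5 + g6);
         C9 = A * real (g1 + g2 + g4 + g5);
         C2 = A * real (g4 + g6 + g7 + g9) + B * real (g5 + g8);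
         C4 = A * real (g2 + g3 + g8 + g9) + B * real (g5 + g6);
         C6 = A * real (g1 + g2 + g7 + g8) + B * real (g4 + g5);
         C8 = A * real (g1 + g3 + g4 + g6) + B * real (g2 + g5);
         C5 = A * real (g1 + g3 + g7 + g9) + B * real (g2 + g4 + g6 + g8);
         \<Psi> = real g5 * (real g5 - 1) / 2 * (2 * f (2 * \<beta>) - f (4 * \<beta>))
             + 1/2 * (real g1 * C1 + real g2 * C2 + real g3 * C3 + real g4 * C4 + real g5 * C5
                      + real g6 * C6 + real g7 * C7 + real g8 * C8 + real g9 * C9);
         \<Psi>bar = real g5 * (real g5 - 1) / 2 * (2 * f (2 * \<beta>) - f (4 * \<beta>))
             + 1/2 * (f \<beta> + f (2 * \<beta>) - f (3 * \<beta>)) * (real (min k g) + real g5) * (real g - real g5)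
     in \<Psi> \<le> \<Psi>bar"
proof -
  define A where "A = 2 * fcn p \<beta> - fcn p (2 * \<beta>)"
  define B where "B = fcn p \<beta> + fcn p (2 * \<beta>) - fcn p (3 * \<beta>)"
  define g where "g = g1 + g2 + g3 + g4 + g5 + g6 + g7 + g8 + g9"
  define m where "m = min k g"
  have AB: "A \<le> B" and B0: "0 \<le> B" using fvals[OF hp hb] unfolding A_def B_def by auto
  have n1: "g5 + g6 + g8 + g9 \<le> m" unfolding m_def g_def using assms by linarith
  have n2: "g4 + g6 + g7 + g9 + g5 + g8 \<le> m" unfolding m_def g_def using assms by linarith
  have n3: "g4 + g5 + g7 + g8 \<le> m" unfolding m_def g_def using assms by linarith
  have n4: "g2 + g3 + g8 + g9 + g5 + g6 \<le> m" unfolding m_def g_def using assms by linarith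
  have n6: "g1 + g2 + g7 + g8 + g4 + g5 \<le> m" unfolding m_def g_def using assms by linarith
  have n7: "g2 + g3 + g5 + g6 \<le> m" unfolding m_def g_def using assms by linarith
  have n8: "g1 + g3 + g4 + g6 + g2 + g5 \<le> m" unfolding m_def g_def using assms by linarith
  have n9: "g1 + g2 + g4 + g5 \<le> m" unfolding m_def g_def using assms by linarith
  have R: "real g1 * (A * (real g5 + real g6 + real g8 + real g9)) + real g2 * (A * (real g4 + real g6 + real g7 + real g9) + B * (real g5 + real g8))
       + real g3 * (A * (real g4 + real g5 + real g7 + real g8)) + real g4 * (A * (real g2 + real g3 + real g8 + real g9) + B * (real g5 + real g6))
       + real g5 * (A * (real g1 + real g3 + real g7 + real g9) + B * (real g2 + real g4 + real g6 + real g8))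
       + real g6 * (A * (real g1 + real g2 + real g7 + real g8) + B * (real g4 + real g5)) + real g7 * (A * (real g2 + real g3 + real g5 + real g6))
       + real g8 * (A * (real g1 + real g3 + real g4 + real g6) + B * (real g2 + real g5)) + real g9 * (A * (real g1 + real g2 + real g4 + real g5))
       \<le> B * (real m + real g5) * (real g - real g5)"
  proof -
    have gg: "real g = real g1+real g2+real g3+real g4+real g5+real g6+real g7+real g8+real g9"
      unfolding g_def by simp
    have nr: "real g5 + real g6 + real g8 + real g9 \<le> real m"
      "real g4 + real g6 + real g7 + real g9 + real g5 + real g8 \<le> real m"
      "real g4 + real g5 + real g7 + real g8 \<le> real m"
      "real g2 + real g3 + real g8 + real g9 + real g5 + real g6 \<le> real m"
      "real g1 + real g2 + real g7 + real g8 + real g4 + real g5 \<le> real m"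
      "real g2 + real g3 + real g5 + real g6 \<le> real m"
      "real g1 + real g3 + real g4 + real g6 + real g2 + real g5 \<le> real m"
      "real g1 + real g2 + real g4 + real g5 \<le> real m"
      using n1 n2 n3 n4 n6 n7 n8 n9 by (simp_all only: of_nat_add[symmetric] of_nat_le_iff)
    show ?thesis unfolding gg by (rule comb; (simp add: AB B0 nr)?)
  qed
  show ?thesis
    unfolding Let_def A_def[symmetric] B_def[symmetric] g_def[symmetric] m_def[symmetric]
    using R by simp
qed

end
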